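(* Under the standing assumptions with $d\ge1$, the following hold on $V$: (i) $E^*_0AE^*_0=a_0E^*_0$, where $a_0=\theta_0+\zeta_1(\theta^*_0-\theta^*_1)^{-1}$; (ii) $E_dA^*E_d=a^*_dE_d$, where $a^*_d=\theta^*_1-\dfrac{\zeta_1+(\theta^*_0-\theta^*_1)(\theta_0-\theta_{d-1})}{\theta_{d-1}-\theta_d}$.
   Context: Let $\mathbb F$ be an algebraically closed field, $d\ge0$, and $q,a,b,c,a^*,b^*,c^*\in\mathbb F$ with $q,b,c,b^*,c^*$ nonzero and $q^2\ne\pm1$. Put $\theta_i=a+bq^{2i-d}+cq^{d-2i}$ and $\theta^*_i=a^*+b^*q^{2i-d}+c^*q^{d-2i}$ ($0\le i\le d$), and assume $\theta_0,\dots,\theta_d$ are mutually distinct and $\theta^*_0,\dots,\theta^*_d$ are mutually distinct (this forces $q^{2i}\ne1$ for $1\le i\le d$). $U_q(\widehat{\mathfrak{sl}}_2)$ is the associative unital $\mathbb F$-algebra with generators $e_i^{\pm},K_i^{\pm1}$ ($i\in\{0,1\}$) and relations $K_iK_i^{-1}=K_i^{-1}K_i=1$, $K_0K_1=K_1K_0$, $K_ie_i^{\pm}K_i^{-1}=q^{\pm2}e_i^{\pm}$, $K_ie_j^{\pm}K_i^{-1}=q^{\mp2}e_j^{\pm}$ ($i\ne j$), $e_i^+e_i^--e_i^-e_i^+=(K_i-K_i^{-1})/(q-q^{-1})$, $e_0^{\pm}e_1^{\mp}=e_1^{\mp}e_0^{\pm}$, and the $q$-Serre relations $(e_i^\pm)^3e_j^\pm-[3]_q(e_i^\pm)^2e_j^\pm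 e_i^\pm+[3]_qe_i^\pm e_j^\pm(e_i^\pm)^2-e_j^\pm(e_i^\pm)^3=0$ ($i\ne j$), where $[3]_q=q^2+1+q^{-2}$. Tensor products of modules are formed via $e_i^+(v\otimes w)=e_i^+v\otimes K_iw+v\otimes e_i^+w$, $e_i^-(v\otimes w)=e_i^-v\otimes w+K_i^{-1}v\otimes e_i^-w$, $K_i(v\otimes w)=K_iv\otimes K_iw$. For nonzero $\alpha\in\mathbb F$, $V(\alpha)$ is the module with basis $x,y$ and $K_1x=qx$, $K_1y=q^{-1}y$, $e_1^-x=y$, $e_1^-y=0$, $e_1^+x=0$, $e_1^+y=x$, $K_0x=q^{-1}x$, $K_0y=qy$, $e_0^-x=0$, $e_0^-y=q\alpha^{-1}x$, $e_0^+x=q^{-1}\alpha y$, $e_0^+y=0$. $V=V(\alpha_1)\otimes\cdots\otimes V(\alpha_d)$ with nonzero $\alpha_i\in\mathbb F$. $U_0$ is the $1$-dimensional span of $x\otimes\cdots\otimes x$. Fix $u,v,u^*,v^*\in\mathbb F$ with $uv^*=-bb^*q^{-1}(q-q^{-1})^2$, $vu^*=-cc^*q^{-1}(q-q^{-1})^2$; set $R=ue_0^++ve_1^-K_1$, $L=u^*e_1^++v^*e_0^-K_0$, $A=a1+bK_0+cK_1+R$, $A^*=a^*1+b^*K_0+c^*K_1+L$, and $E_i=\prod_{0\le j\le d,\,j\ne i}(A-\theta_j1)/(\theta_i-\theta_j)$, $E^*_i=\prod_{0\le j\le d,\,j\ne i}(A^*-\theta^*_j1)/(\theta^*_i-\theta^*_j)$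 in $U_q(\widehat{\mathfrak{sl}}_2)$. $\zeta_1$ denotes the scalar by which $LR$ acts on $U_0$. *)

theory Defs
  imports "HOL-Computational_Algebra.Polynomial"
begin

text \<open>Generators of U_q(sl2-hat) (and the inverses of the K_i).
  Basis of V(alpha): True = x, False = y. Basis of V = V(alpha_1) (x) ... (x) V(alpha_d):
  words w :: bool list of length d (pure tensors of x,y). Operators on V are represented by
  matrices M :: bool list => bool list => 'a, where M w' w is the coefficient of
  the basis vector w' in M applied to the basis vector w.\<close>

datatype ugen = E0p | E0m | E1p | E1m | K0 | K1 | K0i | K1i

text \<open>Action of the generators on V(alpha): m1 q alpha g c b = coefficient of c in g.b\<close>
fun m1 :: "'a::field \<Rightarrow> 'a \<Rightarrow> ugen \<Rightarrow> bool \<Rightarrow> bool \<Rightarrow> 'a" where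
  "m1 q al K1 c b = (if c = b then (if b then q else inverse q) else 0)"
| "m1 q al K0 c b = (if c = b then (if b then inverse q else q) else 0)"
| "m1 q al K1i c b = (if c = b then (if b then inverse q else q) else 0)"
| "m1 q al K0i c b = (if c = b then (if b then q else inverse q) else 0)"
| "m1 q al E1m c b = (if b \<and> \<not> c then 1 else 0)"
| "m1 q al E1p c b = (if \<not> b \<and> c then 1 else 0)"
| "m1 q al E0m c b = (if \<not> b \<and> c then q * inverse al else 0)"
| "m1 q al E0p c b = (if b \<and> \<not> c then inverse q * al else 0)"

text \<open>Counit (action on the trivial 1-dimensional module = empty tensor product).\<close>
fun counit :: "ugen \<Rightarrow> 'a::field" where
  "counit K0 = 1" | "counit K1 = 1" | "counit K0i = 1" | "counit K1i = 1"
| "counit E0p = 0" | "counit E0m = 0" | "counit E1p = 0" | "counit E1m = 0"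

text \<open>Action of the generators on V(al_1) (x) (V(al_2) (x) ... (x) V(al_d)), using
  e_i^+ (v (x) w) = e_i^+ v (x) K_i w + v (x) e_i^+ w,
  e_i^- (v (x) w) = e_i^- v (x) w + K_i^{-1} v (x) e_i^- w,
  K (v (x) w) = K v (x) K w.\<close>
fun tm :: "'a::field \<Rightarrow> 'a list \<Rightarrow> ugen \<Rightarrow> bool list \<Rightarrow> bool list \<Rightarrow> 'a" where
  "tm q [] g [] [] = counit g"
| "tm q (al # als) g (c # w') (b # w) =
     (case g of
        E0p \<Rightarrow> m1 q al E0p c b * tm q als K0 w' w + (if c = b then tm q als E0p w' w else 0)
      | E1p \<Rightarrow> m1 q al E1p c b * tm q als K1 w' w + (if c = b then tm q als E1p w' w else 0)
      | E0m \<Rightarrow> m1 q al E0m c b * (if w' = w then 1 else 0) + m1 q al K0i c b * tm q als E0m w' w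
      | E1m \<Rightarrow> m1 q al E1m c b * (if w' = w then 1 else 0) + m1 q al K1i c b * tm q als E1m w' w
      | _ \<Rightarrow> m1 q al g c b * tm q als g w' w)"
| "tm q _ g _ _ = 0"

definition words :: "nat \<Rightarrow> bool list set" where
  "words d = {w. length w = d}"

definition omult :: "nat \<Rightarrow> (bool list \<Rightarrow> bool list \<Rightarrow> 'a::field) \<Rightarrow> (bool list \<Rightarrow> bool list \<Rightarrow> 'a)
    \<Rightarrow> (bool list \<Rightarrow> bool list \<Rightarrow> 'a)" where
  "omult d M N = (\<lambda>w'' w. \<Sum>w'\<in>words d. M w'' w' * N w' w)"

definition oid :: "bool list \<Rightarrow> bool list \<Rightarrow> 'a::field" where
  "oid = (\<lambda>w' w. if w' = w then 1 else 0)"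

definition opeq :: "nat \<Rightarrow> (bool list \<Rightarrow> bool list \<Rightarrow> 'a) \<Rightarrow> (bool list \<Rightarrow> bool list \<Rightarrow> 'a) \<Rightarrow> bool" where
  "opeq d M N \<longleftrightarrow> (\<forall>w' w. length w' = d \<longrightarrow> length w = d \<longrightarrow> M w' w = N w' w)"

definition Rop :: "'a::field \<Rightarrow> 'a list \<Rightarrow> 'a \<Rightarrow> 'a \<Rightarrow> bool list \<Rightarrow> bool list \<Rightarrow> 'a" where
  "Rop q als u v = (\<lambda>w' w. u * tm q als E0p w' w
      + v * omult (length als) (tm q als E1m) (tm q als K1) w' w)"

definition Lop :: "'a::field \<Rightarrow> 'a list \<Rightarrow> 'a \<Rightarrow> 'a \<Rightarrow> bool list \<Rightarrow> bool list \<Rightarrow> 'a" where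
  "Lop q als us vs = (\<lambda>w' w. us * tm q als E1p w' w
      + vs * omult (length als) (tm q als E0m) (tm q als K0) w' w)"

text \<open>A = a 1 + b K_0 + c K_1 + R on V  (also used for A* with starred data and L).\<close>
definition Aop :: "'a::field \<Rightarrow> 'a list \<Rightarrow> 'a \<Rightarrow> 'a \<Rightarrow> 'a \<Rightarrow> (bool list \<Rightarrow> bool list \<Rightarrow> 'a)
    \<Rightarrow> bool list \<Rightarrow> bool list \<Rightarrow> 'a" where
  "Aop q als a b c X = (\<lambda>w' w. a * oid w' w + b * tm q als K0 w' w + c * tm q als K1 w' w + X w' w)"

definition th :: "'a::field \<Rightarrow> nat \<Rightarrow> 'a \<Rightarrow> 'a \<Rightarrow> 'a \<Rightarrow> nat \<Rightarrow> 'a" where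
  "th q d a b c i = a + b * q powi (2 * int i - int d) + c * q powi (int d - 2 * int i)"

definition idem :: "nat \<Rightarrow> (bool list \<Rightarrow> bool list \<Rightarrow> 'a::field) \<Rightarrow> (nat \<Rightarrow> 'a) \<Rightarrow> nat
    \<Rightarrow> bool list \<Rightarrow> bool list \<Rightarrow> 'a" where
  "idem d M t i = foldr (\<lambda>j P. omult d (\<lambda>w' w. (M w' w - t j * oid w' w) / (t i - t j)) P)
       [j \<leftarrow> [0..<Suc d]. j \<noteq> i] oid"

end

theory Submission
  imports Defs
begin


definition nF :: "bool list \<Rightarrow> nat" where "nF w = length (filter Not w)"

fun kk0 :: "'a::field \<Rightarrow> bool list \<Rightarrow> 'a" where
  "kk0 q [] = 1" | "kk0 q (b # w) = (if b then inverse q else q) * kk0 q w"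
fun kk1 :: "'a::field \<Rightarrow> bool list \<Rightarrow> 'a" where
  "kk1 q [] = 1" | "kk1 q (b # w) = (if b then q else inverse q) * kk1 q w"

lemma tm_K0: "tm q als K0 w' w = (if w' = w \<and> length w = length als then kk0 q w else 0)"
  by (induction q als K0 w' w rule: tm.induct) auto

lemma tm_K1: "tm q als K1 w' w = (if w' = w \<and> length w = length als then kk1 q w else 0)"
  by (induction q als K1 w' w rule: tm.induct) auto

lemma nF_simps[simp]: "nF [] = 0" "nF (True # w) = nF w" "nF (False # w) = Suc (nF w)"
  by (auto simp: nF_def)

lemma tm_E0p: "tm q als E0p w' w \<noteq> 0 \<Longrightarrow> length w' = length als \<Longrightarrow> length w = length als
   \<Longrightarrow> nF w' = Suc (nF w)"
proof (induction als arbitrary: w' w)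
  case Nil then show ?case by simp
next
  case (Cons al als)
  then obtain c w1 b w2 where "w' = c # w1" "w = b # w2" by (cases w'; cases w) auto
  with Cons show ?case by (cases c; cases b) (auto simp: tm_K0 split: if_splits)
qed

lemma tm_E1m: "tm q als E1m w' w \<noteq> 0 \<Longrightarrow> length w' = length als \<Longrightarrow> length w = length als
   \<Longrightarrow> nF w' = Suc (nF w)"
proof (induction als arbitrary: w' w)
  case Nil then show ?case by simp
next
  case (Cons al als)
  then obtain c w1 b w2 where "w' = c # w1" "w = b # w2" by (cases w'; cases w) auto
  with Cons show ?case by (cases c; cases b) (auto split: if_splits)
qed

lemma tm_E1p: "tm q als E1p w' w \<noteq> 0 \<Longrightarrow> length w' = length als \<Longrightarrow> length w = length als
   \<Longrightarrow> nF w = Suc (nF w')"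
proof (induction als arbitrary: w' w)
  case Nil then show ?case by simp
next
  case (Cons al als)
  then obtain c w1 b w2 where "w' = c # w1" "w = b # w2" by (cases w'; cases w) auto
  with Cons show ?case by (cases c; cases b) (auto simp: tm_K1 split: if_splits)
qed

lemma tm_E0m: "tm q als E0m w' w \<noteq> 0 \<Longrightarrow> length w' = length als \<Longrightarrow> length w = length als
   \<Longrightarrow> nF w = Suc (nF w')"
proof (induction als arbitrary: w' w)
  case Nil then show ?case by simp
next
  case (Cons al als)
  then obtain c w1 b w2 where "w' = c # w1" "w = b # w2" by (cases w'; cases w) auto
  with Cons show ?case by (cases c; cases b) (auto split: if_splits)
qed

lemma powi_m1: "(q::'a::field) \<noteq> 0 \<Longrightarrow> q powi (k - 1) = inverse q * q powi k"
  by (simp add: power_int_diff field_simps)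

lemma kk0_pow: "q \<noteq> 0 \<Longrightarrow> kk0 q w = q powi (2 * int (nF w) - int (length w))"
proof (induction w)
  case (Cons b w)
  have e: "2 * int (nF (b#w)) - int (length (b#w)) = (2 * int (nF w) - int (length w)) + (if b then -1 else 1)"
    by (cases b) auto
  show ?case unfolding e using Cons by (cases b) (simp_all add: power_int_add powi_m1)
qed simp

lemma kk1_pow: "q \<noteq> 0 \<Longrightarrow> kk1 q w = q powi (int (length w) - 2 * int (nF w))"
proof (induction w)
  case (Cons b w)
  have e: "int (length (b#w)) - 2 * int (nF (b#w)) = (int (length w) - 2 * int (nF w)) + (if b then 1 else -1)"
    by (cases b) auto
  show ?case unfolding e using Cons by (cases b) (simp_all add: power_int_add powi_m1)
qed simp

lemma finite_words[simp]: "finite (words d)"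
  using finite_lists_length_eq[of "UNIV::bool set" d] by (simp add: words_def)

lemma words_Suc: "words (Suc m) = Cons True ` words m \<union> Cons False ` words m"
  by (auto simp: words_def length_Suc_conv)

lemma sum_words_Suc: "(\<Sum>w\<in>words (Suc m). f w) = (\<Sum>w\<in>words m. f (True # w)) + (\<Sum>w\<in>words m. f (False # w))"
  unfolding words_Suc
  by (subst sum.union_disjoint) (auto simp: sum.reindex)

definition ap :: "nat \<Rightarrow> (bool list \<Rightarrow> bool list \<Rightarrow> 'a::field) \<Rightarrow> (bool list \<Rightarrow> 'a) \<Rightarrow> bool list \<Rightarrow> 'a" where
  "ap d M z = (\<lambda>w'. \<Sum>w\<in>words d. M w' w * z w)"

definition vf :: "nat \<Rightarrow> (bool list \<Rightarrow> bool list \<Rightarrow> 'a::field) \<Rightarrow> (nat \<Rightarrow> 'a) \<Rightarrow> nat \<Rightarrow> nat \<Rightarrow> (bool list \<Rightarrow> 'a) \<Rightarrow> bool list \<Rightarrow> 'a" where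
  "vf d M t i j z = (\<lambda>w'. (ap d M z w' - t j * z w') / (t i - t j))"

definition veq :: "nat \<Rightarrow> (bool list \<Rightarrow> 'a) \<Rightarrow> (bool list \<Rightarrow> 'a) \<Rightarrow> bool" where
  "veq d z1 z2 \<longleftrightarrow> (\<forall>w\<in>words d. z1 w = z2 w)"

lemma ap_cong: "veq d z1 z2 \<Longrightarrow> ap d M z1 = ap d M z2"
  unfolding ap_def veq_def by (intro ext sum.cong) auto

lemma vf_cong: "veq d z1 z2 \<Longrightarrow> veq d (vf d M t i j z1) (vf d M t i j z2)"
  unfolding vf_def veq_def using ap_cong[of d z1 z2 M] by (auto simp: veq_def)

lemma ap_oid: "w \<in> words d \<Longrightarrow> ap d oid z w = z w"
proof -
  assume w: "w \<in> words d"
  have "ap d oid z w = (\<Sum>wa\<in>words d. if w = wa then z wa else 0)"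
    unfolding ap_def oid_def by (intro sum.cong) auto
  also have "\<dots> = z w" using w by simp
  finally show ?thesis .
qed

lemma ap_fac: "w' \<in> words d \<Longrightarrow> ap d (\<lambda>w' w. (M w' w - t j * oid w' w) / s) y w' = (ap d M y w' - t j * y w') / s"
proof -
  assume w: "w' \<in> words d"
  have "ap d (\<lambda>w' w. (M w' w - t j * oid w' w) / s) y w' = (\<Sum>w\<in>words d. M w' w * y w - t j * (oid w' w * y w)) / s"
    unfolding ap_def by (simp add: sum_divide_distrib algebra_simps)
  also have "\<dots> = (ap d M y w' - t j * ap d oid y w') / s"
    unfolding ap_def by (simp add: sum_subtractf sum_distrib_left)
  finally show ?thesis by (simp only: ap_oid[OF w])
qed

lemma ap_omult: "ap d (omult d M N) z = ap d M (ap d N z)"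
proof (rule ext)
  fix w'
  have "ap d (omult d M N) z w' = (\<Sum>w\<in>words d. \<Sum>w1\<in>words d. M w' w1 * (N w1 w * z w))"
    unfolding ap_def omult_def by (simp add: sum_distrib_right mult.assoc)
  also have "\<dots> = (\<Sum>w1\<in>words d. \<Sum>w\<in>words d. M w' w1 * (N w1 w * z w))"
    by (rule sum.swap)
  also have "\<dots> = ap d M (ap d N z) w'"
    unfolding ap_def by (simp add: sum_distrib_left)
  finally show "ap d (omult d M N) z w' = ap d M (ap d N z) w'" .
qed

lemma ap_lin: "ap d M (\<lambda>w. x * z1 w + y * z2 w) w' = x * ap d M z1 w' + y * ap d M z2 w'"
  unfolding ap_def by (simp add: sum.distrib sum_distrib_left algebra_simps)

lemma ap_scale: "ap d M (\<lambda>w. x * z1 w) w' = x * ap d M z1 w'"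
  unfolding ap_def by (simp add: sum_distrib_left algebra_simps)

definition vfold where "vfold d M t i js z = foldr (vf d M t i) js z"

lemma vfold_cong: "veq d z1 z2 \<Longrightarrow> veq d (vfold d M t i js z1) (vfold d M t i js z2)"
  unfolding vfold_def by (induction js) (auto intro: vf_cong)

lemma ap_idem_foldr:
  "w' \<in> words d \<Longrightarrow> ap d (foldr (\<lambda>j P. omult d (\<lambda>w' w. (M w' w - t j * oid w' w) / (t i - t j)) P) js oid) z w'
     = vfold d M t i js z w'"
proof (induction js arbitrary: w')
  case Nil then show ?case by (simp add: vfold_def ap_oid)
next
  case (Cons j js)
  have "veq d (ap d (foldr (\<lambda>j P. omult d (\<lambda>w' w. (M w' w - t j * oid w' w) / (t i - t j)) P) js oid) z)
             (vfold d M t i js z)" using Cons.IH by (simp add: veq_def)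
  from ap_cong[OF this] Cons.prems show ?case
    by (simp add: ap_omult vfold_def vf_def ap_fac)
qed

lemma ap_idem: "w' \<in> words d \<Longrightarrow> ap d (idem d M t i) z w' = vfold d M t i [j \<leftarrow> [0..<Suc d]. j \<noteq> i] z w'"
  unfolding idem_def by (rule ap_idem_foldr)

definition pl :: "(nat \<Rightarrow> 'a::field) \<Rightarrow> nat \<Rightarrow> nat list \<Rightarrow> 'a \<Rightarrow> 'a" where
  "pl t i js x = prod_list (map (\<lambda>j. (x - t j) / (t i - t j)) js)"

lemma pl_Cons: "pl t i (j # js) x = (x - t j) / (t i - t j) * pl t i js x"
  by (simp add: pl_def)

lemma vfold_eigen:
  assumes y: "veq d (ap d M y) (\<lambda>w. l * y w)"
  shows "veq d (vfold d M t i js y) (\<lambda>w. pl t i js l * y w)"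
proof (induction js)
  case Nil then show ?case by (simp add: vfold_def pl_def veq_def)
next
  case (Cons j js)
  define a where "a = pl t i js l"
  have IH: "veq d (vfold d M t i js y) (\<lambda>w. a * y w)" using Cons a_def by simp
  have e: "ap d M (vfold d M t i js y) = ap d M (\<lambda>w. a * y w)" using IH ap_cong by blast
  show ?case unfolding veq_def
  proof
    fix w assume w: "w \<in> words d"
    have "vfold d M t i (j # js) y w = (ap d M (vfold d M t i js y) w - t j * vfold d M t i js y w) / (t i - t j)"
      by (simp add: vfold_def vf_def)
    also have "\<dots> = (a * (l * y w) - t j * (a * y w)) / (t i - t j)"
      using IH y w unfolding e ap_scale by (simp add: veq_def)
    also have "\<dots> = pl t i (j # js) l * y w" unfolding pl_Cons a_def[symmetric]
      by (cases "t i - t j = 0") (simp_all add: field_simps)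
    finally show "vfold d M t i (j # js) y w = pl t i (j # js) l * y w" .
  qed
qed

lemma alg2': "D \<noteq> 0 \<Longrightarrow> S \<noteq> 0 \<Longrightarrow> (p1 * (l1 * R + G) + (p0 - p1) / D * ((l1 + D) * G) - T * (p1 * R + (p0 - p1) / D * G)) / S
   = (l1 - T) / S * p1 * R + (((l1 + D) - T) / S * p0 - (l1 - T) / S * p1) / D * (G::'a::field)"
  by (simp add: field_simps)

lemma alg2: "(p1 * (l1 * R + G) + (p0 - p1) / (l0 - l1) * (l0 * G) - T * (p1 * R + (p0 - p1) / (l0 - l1) * G)) / S
   = (l1 - T) / S * p1 * R + ((l0 - T) / S * p0 - (l1 - T) / S * p1) / (l0 - l1) * (G::'a::field)"
  if "l0 \<noteq> l1"
proof (cases "S = 0")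
  case False
  have "l0 - l1 \<noteq> 0" using that by simp
  from alg2'[OF this False, of p1 l1 R G p0 T] show ?thesis by simp
qed simp

lemma vfold_eigen2:
  assumes r: "veq d (ap d M r) (\<lambda>w. l1 * r w + g w)" and g: "veq d (ap d M g) (\<lambda>w. l0 * g w)"
    and ne: "l0 \<noteq> l1"
  shows "veq d (vfold d M t i js r) (\<lambda>w. pl t i js l1 * r w + (pl t i js l0 - pl t i js l1) / (l0 - l1) * g w)"
proof (induction js)
  case Nil then show ?case by (simp add: vfold_def pl_def veq_def)
next
  case (Cons j js)
  define a where "a = pl t i js l1"
  define b where "b = (pl t i js l0 - pl t i js l1) / (l0 - l1)"
  have IH: "veq d (vfold d M t i js r) (\<lambda>w. a * r w + b * g w)" using Cons a_def b_def by simp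
  have e: "ap d M (vfold d M t i js r) = ap d M (\<lambda>w. a * r w + b * g w)" using IH ap_cong by blast
  show ?case unfolding veq_def
  proof
    fix w assume w: "w \<in> words d"
    have "vfold d M t i (j # js) r w = (ap d M (vfold d M t i js r) w - t j * vfold d M t i js r w) / (t i - t j)"
      by (simp add: vfold_def vf_def)
    also have "\<dots> = (a * (l1 * r w + g w) + b * (l0 * g w) - t j * (a * r w + b * g w)) / (t i - t j)"
      using IH r g w unfolding e ap_lin by (simp add: veq_def)
    also have "\<dots> = pl t i (j # js) l1 * r w + (pl t i (j # js) l0 - pl t i (j # js) l1) / (l0 - l1) * g w"
      unfolding pl_Cons a_def b_def by (rule alg2[OF ne])
    finally show "vfold d M t i (j # js) r w = pl t i (j # js) l1 * r w + (pl t i (j # js) l0 - pl t i (j # js) l1) / (l0 - l1) * g w" .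
  qed
qed

lemma nF_le: "nF w \<le> length w"
  unfolding nF_def by simp

lemma supp_up_step:
  assumes H: "\<And>z w'. w' \<in> words d \<Longrightarrow> ap d M z w' = t (nF w') * z w' + ap d N z w'"
    and HN: "\<And>w' w. w' \<in> words d \<Longrightarrow> w \<in> words d \<Longrightarrow> N w' w \<noteq> 0 \<Longrightarrow> nF w = Suc (nF w')"
    and z: "\<forall>w\<in>words d. Suc k \<le> nF w \<longrightarrow> z w = 0"
  shows "\<forall>w\<in>words d. k \<le> nF w \<longrightarrow> vf d M t i k z w = 0"
proof (intro ballI impI)
  fix w assume w: "w \<in> words d" and k: "k \<le> nF w"
  have "ap d N z w = 0" unfolding ap_def
    by (rule sum.neutral) (use HN z w k in fastforce)
  then show "vf d M t i k z w = 0" using H[OF w, of z] z w k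
    by (cases "nF w = k") (auto simp: vf_def)
qed

lemma supp_up:
  assumes H: "\<And>z w'. w' \<in> words d \<Longrightarrow> ap d M z w' = t (nF w') * z w' + ap d N z w'"
    and HN: "\<And>w' w. w' \<in> words d \<Longrightarrow> w \<in> words d \<Longrightarrow> N w' w \<noteq> 0 \<Longrightarrow> nF w = Suc (nF w')"
    and k: "k \<le> Suc d"
  shows "\<forall>w\<in>words d. k \<le> nF w \<longrightarrow> vfold d M t i [k..<Suc d] z w = 0"
  using k
proof (induction k rule: inc_induct)
  case base
  show ?case
  proof (intro ballI impI)
    fix w assume "w \<in> words d" "Suc d \<le> nF w"
    then have False using nF_le[of w] by (simp add: words_def)
    then show "vfold d M t i [Suc d..<Suc d] z w = 0" ..
  qed
next
  case (step n)
  have e: "[n..<Suc d] = n # [Suc n..<Suc d]" using step(2) by (simp add: upt_conv_Cons)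
  show ?case unfolding e vfold_def
    using supp_up_step[OF H HN, where k=n and z="vfold d M t i [Suc n..<Suc d] z" and i=i] step(3)
    unfolding vfold_def by simp
qed

lemma supp_lo_step:
  assumes H: "\<And>z w'. w' \<in> words d \<Longrightarrow> ap d M z w' = t (nF w') * z w' + ap d N z w'"
    and HN: "\<And>w' w. w' \<in> words d \<Longrightarrow> w \<in> words d \<Longrightarrow> N w' w \<noteq> 0 \<Longrightarrow> nF w' = Suc (nF w)"
    and z: "\<forall>w\<in>words d. nF w < k \<longrightarrow> z w = 0"
  shows "\<forall>w\<in>words d. nF w < Suc k \<longrightarrow> vf d M t i k z w = 0"
proof (intro ballI impI)
  fix w assume w: "w \<in> words d" and k: "nF w < Suc k"
  have "ap d N z w = 0" unfolding ap_def
    by (rule sum.neutral) (use HN z w k in fastforce)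
  then show "vf d M t i k z w = 0" using H[OF w, of z] z w k
    by (cases "nF w = k") (auto simp: vf_def)
qed

lemma supp_lo:
  assumes H: "\<And>z w'. w' \<in> words d \<Longrightarrow> ap d M z w' = t (nF w') * z w' + ap d N z w'"
    and HN: "\<And>w' w. w' \<in> words d \<Longrightarrow> w \<in> words d \<Longrightarrow> N w' w \<noteq> 0 \<Longrightarrow> nF w' = Suc (nF w)"
  shows "\<forall>w\<in>words d. nF w < k \<longrightarrow> vfold d M t i (rev [0..<k]) z w = 0"
proof (induction k)
  case 0 then show ?case by simp
next
  case (Suc k)
  then show ?case using supp_lo_step[OF H HN, of k "vfold d M t i (rev [0..<k]) z" i]
    by (simp add: vfold_def)
qed

lemma ap_vf: "ap d M (vf d M t i k z) w' = (ap d M (ap d M z) w' - t k * ap d M z w') / (t i - t k)"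
  unfolding vf_def ap_def
  by (simp add: sum_divide_distrib[symmetric] sum_subtractf sum_distrib_left algebra_simps)

lemma vf_comm: "vf d M t i j (vf d M t i k z) w = vf d M t i k (vf d M t i j z) w"
proof -
  have gen: "\<And>P Q Z a b sa (sb::'a). ((P - a * Q) / sa - b * ((Q - a * Z) / sa)) / sb
      = (P - a * Q - b * Q + a * b * Z) / (sa * sb)"
    by (case_tac "sa = 0"; case_tac "sb = 0") (simp_all add: field_simps)
  have 1: "vf d M t i j (vf d M t i k z) w = (ap d M (ap d M z) w - t k * ap d M z w - t j * ap d M z w + t k * t j * z w) / ((t i - t k) * (t i - t j))"
    unfolding vf_def[of d M t i j "vf d M t i k z"] ap_vf unfolding vf_def by (rule gen)
  have 2: "vf d M t i k (vf d M t i j z) w = (ap d M (ap d M z) w - t j * ap d M z w - t k * ap d M z w + t j * t k * z w) / ((t i - t j) * (t i - t k))"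
    unfolding vf_def[of d M t i k "vf d M t i j z"] ap_vf unfolding vf_def by (rule gen)
  show ?thesis unfolding 1 2 by (simp add: algebra_simps)
qed

lemma vf_vfold_comm: "veq d (vf d M t i x (vfold d M t i xs z)) (vfold d M t i xs (vf d M t i x z))"
proof (induction xs)
  case Nil then show ?case by (simp add: vfold_def veq_def)
next
  case (Cons y ys)
  have "veq d (vf d M t i x (vf d M t i y (vfold d M t i ys z))) (vf d M t i y (vf d M t i x (vfold d M t i ys z)))"
    by (simp add: veq_def vf_comm)
  moreover have "veq d (vf d M t i y (vf d M t i x (vfold d M t i ys z))) (vf d M t i y (vfold d M t i ys (vf d M t i x z)))"
    by (rule vf_cong[OF Cons])
  ultimately show ?case by (simp add: veq_def vfold_def)
qed

lemma vfold_rev: "veq d (vfold d M t i (rev xs) z) (vfold d M t i xs z)"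
proof (induction xs arbitrary: z)
  case Nil then show ?case by (simp add: veq_def)
next
  case (Cons x xs)
  have "vfold d M t i (rev (x # xs)) z = vfold d M t i (rev xs) (vf d M t i x z)"
    by (simp add: vfold_def)
  moreover have "veq d (vfold d M t i (rev xs) (vf d M t i x z)) (vfold d M t i xs (vf d M t i x z))"
    by (rule Cons)
  moreover have "veq d (vf d M t i x (vfold d M t i xs z)) (vfold d M t i xs (vf d M t i x z))"
    by (rule vf_vfold_comm)
  ultimately show ?case by (simp add: veq_def vfold_def)
qed

lemma nF_zero: "nF w = 0 \<Longrightarrow> w = replicate (length w) True"
proof (induction w)
  case (Cons b w) then show ?case by (cases b) auto
qed simp

lemma nF_full: "nF w = length w \<Longrightarrow> w = replicate (length w) False"
proof (induction w)
  case (Cons b w) then show ?case using nF_le[of w] by (cases b) auto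
qed simp

lemma nF_X[simp]: "nF (replicate n True) = 0"
  by (induction n) auto
lemma nF_Y[simp]: "nF (replicate n False) = n"
  by (induction n) auto
lemma X_words[simp]: "replicate d True \<in> words d" and Y_words[simp]: "replicate d False \<in> words d"
  by (auto simp: words_def)

lemma ap_e: "w0 \<in> words d \<Longrightarrow> ap d M (\<lambda>w. if w = w0 then 1 else 0) w' = M w' w0"
proof -
  assume w0: "w0 \<in> words d"
  have "ap d M (\<lambda>w. if w = w0 then 1 else 0) w' = (\<Sum>w\<in>words d. if w = w0 then M w' w else 0)"
    unfolding ap_def by (intro sum.cong) auto
  also have "\<dots> = M w' w0" using w0 by simp
  finally show ?thesis .
qed

lemma omult_ap: "omult d M N w' w = ap d M (\<lambda>x. N x w) w'"
  unfolding omult_def ap_def by simp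

lemma filter_ne0: "[j \<leftarrow> [0..<Suc d]. j \<noteq> 0] = [1..<Suc d]"
proof -
  have "[0..<Suc d] = 0 # [1..<Suc d]" by (simp add: upt_conv_Cons)
  then show ?thesis by (simp del: upt_Suc add: filter_id_conv)
qed

lemma filter_ned: "[j \<leftarrow> [0..<Suc d]. j \<noteq> d] = [0..<d]"
  by (simp add: filter_id_conv)

lemma part1:
  fixes A As R L :: "bool list \<Rightarrow> bool list \<Rightarrow> 'a::field"
  assumes HA: "\<And>z w'. w' \<in> words d \<Longrightarrow> ap d A z w' = t (nF w') * z w' + ap d R z w'"
    and HR: "\<And>w' w. w' \<in> words d \<Longrightarrow> w \<in> words d \<Longrightarrow> R w' w \<noteq> 0 \<Longrightarrow> nF w' = Suc (nF w)"
    and HAs: "\<And>z w'. w' \<in> words d \<Longrightarrow> ap d As z w' = ts (nF w') * z w' + ap d L z w'"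
    and HL: "\<And>w' w. w' \<in> words d \<Longrightarrow> w \<in> words d \<Longrightarrow> L w' w \<noteq> 0 \<Longrightarrow> nF w = Suc (nF w')"
    and tsd: "\<And>j. 1 \<le> j \<Longrightarrow> j \<le> d \<Longrightarrow> ts 0 \<noteq> ts j"
    and d1: "1 \<le> d"
    and zeta: "\<And>w. w \<in> words d \<Longrightarrow> omult d L R w (replicate d True) = zeta1 * oid w (replicate d True)"
  shows "opeq d (omult d (omult d (idem d As ts 0) A) (idem d As ts 0))
           (\<lambda>w' w. (t 0 + zeta1 * inverse (ts 0 - ts 1)) * idem d As ts 0 w' w)"
proof -
  define X where "X = replicate d True"
  define P where "P = idem d As ts 0"
  define js where "js = [1..<Suc d]"
  define e0 where "e0 = (\<lambda>w::bool list. if w = X then (1::'a) else 0)"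
  define a0 where "a0 = t 0 + zeta1 * inverse (ts 0 - ts 1)"
  have Xw: "X \<in> words d" by (simp add: X_def)
  have nfX: "\<And>w. w \<in> words d \<Longrightarrow> nF w = 0 \<longleftrightarrow> w = X"
  proof -
    fix w assume "w \<in> words d"
    then have l: "length w = d" by (simp add: words_def)
    show "nF w = 0 \<longleftrightarrow> w = X"
    proof
      assume "nF w = 0" then show "w = X" using nF_zero[of w] l by (simp add: X_def)
    qed (simp add: X_def)
  qed
  have apP: "\<And>z w. w \<in> words d \<Longrightarrow> ap d P z w = vfold d As ts 0 js z w"
    unfolding P_def js_def using ap_idem[of _ d As ts 0] filter_ne0 by simp
  have F1: "\<And>z w. w \<in> words d \<Longrightarrow> w \<noteq> X \<Longrightarrow> ap d P z w = 0"
  proof -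
    fix z w assume w: "w \<in> words d" "w \<noteq> X"
    have "1 \<le> nF w" using nfX[OF w(1)] w(2) by simp
    then show "ap d P z w = 0" using supp_up[OF HAs HL, of 1 0 z] w by (simp add: apP js_def)
  qed
  define v1 where "v1 = ap d A e0"
  define g where "g = (\<lambda>w. (t 0 * (ts 0 - ts 1) + zeta1) * e0 w)"
  have RX: "R X X = 0" using HR[OF Xw Xw] by (auto simp: X_def)
  have LX: "\<And>w. w \<in> words d \<Longrightarrow> L w X = 0"
  proof (rule ccontr)
    fix w assume w: "w \<in> words d" "L w X \<noteq> 0"
    then have "nF X = Suc (nF w)" using HL[OF w(1) Xw] by simp
    then show False by (simp add: X_def)
  qed
  have v1e: "\<And>w. w \<in> words d \<Longrightarrow> v1 w = t 0 * e0 w + R w X"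
    unfolding v1_def using HA ap_e[OF Xw, of R] by (auto simp: e0_def X_def)
  have v1eq: "veq d v1 (\<lambda>w. t 0 * e0 w + 1 * R w X)" using v1e by (simp add: veq_def)
  have ha: "veq d (ap d As v1) (\<lambda>w. ts 1 * v1 w + g w)"
    unfolding veq_def
  proof
    fix w assume w: "w \<in> words d"
    have "ap d L v1 w = t 0 * ap d L e0 w + 1 * ap d L (\<lambda>x. R x X) w"
      unfolding ap_cong[OF v1eq] ap_lin ..
    also have "\<dots> = zeta1 * e0 w"
    proof -
      have "ap d L e0 w = 0" using ap_e[OF Xw, of L w] LX[OF w] by (simp add: e0_def)
      moreover have "ap d L (\<lambda>x. R x X) w = zeta1 * e0 w"
        using zeta[OF w] by (simp add: omult_ap X_def e0_def oid_def)
      ultimately show ?thesis by simp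
    qed
    finally have 1: "ap d L v1 w = zeta1 * e0 w" .
    have 2: "ts (nF w) * v1 w = ts 1 * v1 w + (ts 0 - ts 1) * t 0 * e0 w"
    proof (cases "w = X")
      case True then show ?thesis using v1e[OF w] RX by (simp add: e0_def X_def algebra_simps)
    next
      case False
      then show ?thesis using v1e[OF w] HR[OF w Xw] by (cases "R w X = 0") (auto simp: e0_def X_def)
    qed
    show "ap d As v1 w = ts 1 * v1 w + g w"
      unfolding HAs[OF w] 1 2 g_def by (simp add: algebra_simps)
  qed
  have hb: "veq d (ap d As g) (\<lambda>w. ts 0 * g w)"
    unfolding veq_def
  proof
    fix w assume w: "w \<in> words d"
    have "ap d L g w = (t 0 * (ts 0 - ts 1) + zeta1) * L w X"
      unfolding g_def ap_scale e0_def using ap_e[OF Xw, of L] by simp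
    then show "ap d As g w = ts 0 * g w" unfolding HAs[OF w] using LX[OF w] nfX[OF w]
      by (auto simp: g_def e0_def)
  qed
  have ne: "ts 0 \<noteq> ts 1" using tsd[of 1] d1 by simp
  have "1 \<in> set js" using d1 by (auto simp: js_def)
  then have pl1: "pl ts 0 js (ts 1) = 0" unfolding pl_def prod_list_zero_iff by force
  have mapeq: "map (\<lambda>j. (ts 0 - ts j) / (ts 0 - ts j)) js = map (\<lambda>_. 1) js"
  proof (rule map_cong)
    fix j assume "j \<in> set js"
    then have "1 \<le> j" "j \<le> d" by (auto simp: js_def)
    then have "ts 0 - ts j \<noteq> 0" using tsd by simp
    then show "(ts 0 - ts j) / (ts 0 - ts j) = 1" by simp
  qed simp
  have pl0: "pl ts 0 js (ts 0) = 1" unfolding pl_def mapeq by (simp add: map_replicate_const)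
  have ev: "veq d (vfold d As ts 0 js v1) (\<lambda>w. pl ts 0 js (ts 1) * v1 w + (pl ts 0 js (ts 0) - pl ts 0 js (ts 1)) / (ts 0 - ts 1) * g w)"
    by (rule vfold_eigen2[OF ha hb ne])
  have PV: "\<And>w. w \<in> words d \<Longrightarrow> ap d P v1 w = a0 * e0 w"
  proof -
    fix w assume w: "w \<in> words d"
    have "ap d P v1 w = (t 0 * (ts 0 - ts 1) + zeta1) * e0 w / (ts 0 - ts 1)"
      using ev w pl1 by (simp add: apP veq_def pl0 g_def)
    also have "\<dots> = a0 * e0 w" unfolding a0_def using ne by (simp add: field_simps)
    finally show "ap d P v1 w = a0 * e0 w" .
  qed
  show ?thesis unfolding opeq_def P_def[symmetric] a0_def[symmetric]
  proof (intro allI impI)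
    fix w' w :: "bool list" assume l: "length w' = d" "length w = d"
    then have w': "w' \<in> words d" and w: "w \<in> words d" by (auto simp: words_def)
    define \<beta> where "\<beta> = P X w"
    have col: "veq d (\<lambda>x. P x w) (\<lambda>x. \<beta> * e0 x)" unfolding veq_def
    proof
      fix x assume x: "x \<in> words d"
      show "P x w = \<beta> * e0 x"
      proof (cases "x = X")
        case False
        have "P x w = ap d P (\<lambda>y. if y = w then 1 else 0) x" using ap_e[OF w, of P x] by simp
        also have "\<dots> = 0" using F1[OF x False] .
        finally show ?thesis using False by (simp add: e0_def)
      qed (simp add: \<beta>_def e0_def)
    qed
    have "ap d A (\<lambda>x. \<beta> * e0 x) = (\<lambda>w'. \<beta> * v1 w')"
      by (rule ext) (simp add: ap_scale v1_def)
    then have "omult d (omult d P A) P w' w = ap d P (\<lambda>w'. \<beta> * v1 w') w'"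
      unfolding omult_ap ap_omult ap_cong[OF col] by simp
    also have "\<dots> = \<beta> * (a0 * e0 w')" unfolding ap_scale PV[OF w'] ..
    also have "\<dots> = a0 * P w' w" using col w' by (simp add: veq_def)
    finally show "omult d (omult d P A) P w' w = a0 * P w' w" .
  qed
qed

lemma part2:
  fixes A As R L :: "bool list \<Rightarrow> bool list \<Rightarrow> 'a::field"
  assumes HA: "\<And>z w'. w' \<in> words d \<Longrightarrow> ap d A z w' = t (nF w') * z w' + ap d R z w'"
    and HR: "\<And>w' w. w' \<in> words d \<Longrightarrow> w \<in> words d \<Longrightarrow> R w' w \<noteq> 0 \<Longrightarrow> nF w' = Suc (nF w)"
    and HAs: "\<And>z w'. w' \<in> words d \<Longrightarrow> ap d As z w' = ts (nF w') * z w' + ap d L z w'"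
    and HL: "\<And>w' w. w' \<in> words d \<Longrightarrow> w \<in> words d \<Longrightarrow> L w' w \<noteq> 0 \<Longrightarrow> nF w = Suc (nF w')"
    and td: "\<And>j. j < d \<Longrightarrow> t d \<noteq> t j"
    and d1: "1 \<le> d"
  shows "opeq d (omult d (omult d (idem d A t d) As) (idem d A t d))
           (\<lambda>w' w. (ts d + omult d R L (replicate d False) (replicate d False) / (t d - t (d - 1))) * idem d A t d w' w)"
proof -
  define Y where "Y = replicate d False"
  define kappa where "kappa = omult d R L Y Y"
  define P where "P = idem d A t d"
  define js where "js = [0..<d]"
  define e0 where "e0 = (\<lambda>w::bool list. if w = Y then (1::'a) else 0)"
  define a0 where "a0 = ts d + kappa / (t d - t (d - 1))"
  have Yw: "Y \<in> words d" by (simp add: Y_def)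
  have nfY: "\<And>w. w \<in> words d \<Longrightarrow> nF w = d \<longleftrightarrow> w = Y"
  proof -
    fix w assume "w \<in> words d"
    then have l: "length w = d" by (simp add: words_def)
    show "nF w = d \<longleftrightarrow> w = Y"
    proof
      assume "nF w = d" then show "w = Y" using nF_full[of w] l by (simp add: Y_def)
    qed (simp add: Y_def)
  qed
  have nfle: "\<And>w. w \<in> words d \<Longrightarrow> nF w \<le> d" using nF_le by (auto simp: words_def)
  have apP: "\<And>z w. w \<in> words d \<Longrightarrow> ap d P z w = vfold d A t d js z w"
    unfolding P_def js_def using ap_idem[of _ d A t d] filter_ned by simp
  have F1: "\<And>z w. w \<in> words d \<Longrightarrow> w \<noteq> Y \<Longrightarrow> ap d P z w = 0"
  proof -
    fix z w assume w: "w \<in> words d" "w \<noteq> Y"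
    have "nF w < d" using nfY[OF w(1)] w(2) nfle[OF w(1)] by simp
    then have "vfold d A t d (rev js) z w = 0" using supp_lo[OF HA HR, of d d z] w by (simp add: js_def)
    then show "ap d P z w = 0" using vfold_rev[of d A t d js z] w by (simp add: apP veq_def)
  qed
  define v1 where "v1 = ap d As e0"
  define g where "g = (\<lambda>w. (ts d * (t d - t (d - 1)) + kappa) * e0 w)"
  have LY: "L Y Y = 0" using HL[OF Yw Yw] by (auto simp: Y_def)
  have RY: "\<And>w. w \<in> words d \<Longrightarrow> R w Y = 0"
  proof (rule ccontr)
    fix w assume w: "w \<in> words d" "R w Y \<noteq> 0"
    then have "nF w = Suc d" using HR[OF w(1) Yw] by (simp add: Y_def)
    then show False using nfle[OF w(1)] by simp
  qed
  have v1e: "\<And>w. w \<in> words d \<Longrightarrow> v1 w = ts d * e0 w + L w Y"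
    unfolding v1_def using HAs ap_e[OF Yw, of L] by (auto simp: e0_def Y_def)
  have v1eq: "veq d v1 (\<lambda>w. ts d * e0 w + 1 * L w Y)" using v1e by (simp add: veq_def)
  have RL: "\<And>w. w \<in> words d \<Longrightarrow> omult d R L w Y = kappa * e0 w"
  proof -
    fix w assume w: "w \<in> words d"
    show "omult d R L w Y = kappa * e0 w"
    proof (cases "w = Y")
      case False
      have "omult d R L w Y = 0" unfolding omult_def
      proof (rule sum.neutral, rule ballI, rule ccontr)
        fix x assume x: "x \<in> words d" "R w x * L x Y \<noteq> 0"
        then have "nF w = Suc (nF x)" "nF Y = Suc (nF x)" using HR[OF w x(1)] HL[OF x(1) Yw] by auto
        then have "nF w = d" by (simp add: Y_def)
        then show False using nfY[OF w] False by simp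
      qed
      then show ?thesis using False by (simp add: e0_def)
    qed (simp add: kappa_def e0_def)
  qed
  have ha: "veq d (ap d A v1) (\<lambda>w. t (d - 1) * v1 w + g w)"
    unfolding veq_def
  proof
    fix w assume w: "w \<in> words d"
    have "ap d R v1 w = ts d * ap d R e0 w + 1 * ap d R (\<lambda>x. L x Y) w"
      unfolding ap_cong[OF v1eq] ap_lin ..
    also have "\<dots> = kappa * e0 w"
    proof -
      have "ap d R e0 w = 0" using ap_e[OF Yw, of R w] RY[OF w] by (simp add: e0_def)
      moreover have "ap d R (\<lambda>x. L x Y) w = kappa * e0 w"
        using RL[OF w] by (simp add: omult_ap)
      ultimately show ?thesis by simp
    qed
    finally have 1: "ap d R v1 w = kappa * e0 w" .
    have 2: "t (nF w) * v1 w = t (d - 1) * v1 w + (t d - t (d - 1)) * ts d * e0 w"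
    proof (cases "w = Y")
      case True then show ?thesis using v1e[OF w] LY by (simp add: e0_def Y_def algebra_simps)
    next
      case False
      then show ?thesis using v1e[OF w] HL[OF w Yw] by (cases "L w Y = 0") (auto simp: e0_def Y_def)
    qed
    show "ap d A v1 w = t (d - 1) * v1 w + g w"
      unfolding HA[OF w] 1 2 g_def by (simp add: algebra_simps)
  qed
  have hb: "veq d (ap d A g) (\<lambda>w. t d * g w)"
    unfolding veq_def
  proof
    fix w assume w: "w \<in> words d"
    have "ap d R g w = (ts d * (t d - t (d - 1)) + kappa) * R w Y"
      unfolding g_def ap_scale e0_def using ap_e[OF Yw, of R] by simp
    then show "ap d A g w = t d * g w" unfolding HA[OF w] using RY[OF w] nfY[OF w]
      by (auto simp: g_def e0_def)
  qed
  have ne: "t d \<noteq> t (d - 1)" using td[of "d - 1"] d1 by simp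
  have "d - 1 \<in> set js" using d1 by (auto simp: js_def)
  then have pl1: "pl t d js (t (d - 1)) = 0" unfolding pl_def prod_list_zero_iff by force
  have mapeq: "map (\<lambda>j. (t d - t j) / (t d - t j)) js = map (\<lambda>_. 1) js"
  proof (rule map_cong)
    fix j assume "j \<in> set js"
    then have "j < d" by (auto simp: js_def)
    then have "t d - t j \<noteq> 0" using td by simp
    then show "(t d - t j) / (t d - t j) = 1" by simp
  qed simp
  have pl0: "pl t d js (t d) = 1" unfolding pl_def mapeq by (simp add: map_replicate_const)
  have ev: "veq d (vfold d A t d js v1) (\<lambda>w. pl t d js (t (d - 1)) * v1 w + (pl t d js (t d) - pl t d js (t (d - 1))) / (t d - t (d - 1)) * g w)"
    by (rule vfold_eigen2[OF ha hb ne])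
  have PV: "\<And>w. w \<in> words d \<Longrightarrow> ap d P v1 w = a0 * e0 w"
  proof -
    fix w assume w: "w \<in> words d"
    have "ap d P v1 w = (ts d * (t d - t (d - 1)) + kappa) * e0 w / (t d - t (d - 1))"
      using ev w pl1 by (simp add: apP veq_def pl0 g_def)
    also have "\<dots> = a0 * e0 w" unfolding a0_def using ne by (simp add: field_simps)
    finally show "ap d P v1 w = a0 * e0 w" .
  qed
  show ?thesis unfolding opeq_def P_def[symmetric] Y_def[symmetric] kappa_def[symmetric] a0_def[symmetric]
  proof (intro allI impI)
    fix w' w :: "bool list" assume l: "length w' = d" "length w = d"
    then have w': "w' \<in> words d" and w: "w \<in> words d" by (auto simp: words_def)
    define \<beta> where "\<beta> = P Y w"
    have col: "veq d (\<lambda>x. P x w) (\<lambda>x. \<beta> * e0 x)" unfolding veq_def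
    proof
      fix x assume x: "x \<in> words d"
      show "P x w = \<beta> * e0 x"
      proof (cases "x = Y")
        case False
        have "P x w = ap d P (\<lambda>y. if y = w then 1 else 0) x" using ap_e[OF w, of P x] by simp
        also have "\<dots> = 0" using F1[OF x False] .
        finally show ?thesis using False by (simp add: e0_def)
      qed (simp add: \<beta>_def e0_def)
    qed
    have "ap d As (\<lambda>x. \<beta> * e0 x) = (\<lambda>w'. \<beta> * v1 w')"
      by (rule ext) (simp add: ap_scale v1_def)
    then have "omult d (omult d P As) P w' w = ap d P (\<lambda>w'. \<beta> * v1 w') w'"
      unfolding omult_ap ap_omult ap_cong[OF col] by simp
    also have "\<dots> = \<beta> * (a0 * e0 w')" unfolding ap_scale PV[OF w'] ..
    also have "\<dots> = a0 * P w' w" using col w' by (simp add: veq_def)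
    finally show "omult d (omult d P As) P w' w = a0 * P w' w" .
  qed
qed




lemma words_0: "words 0 = {[]}" by (auto simp: words_def)
lemma kk_rep[simp]: "kk0 q (replicate m True) = inverse q ^ m" "kk1 q (replicate m True) = q ^ m"
  "kk0 q (replicate m False) = q ^ m" "kk1 q (replicate m False) = inverse q ^ m"
  by (induction m) auto

lemma S13: "(\<Sum>w\<in>words (length als). tm q als E1p (replicate (length als) True) w * tm q als E0p w (replicate (length als) True))
   = (\<Sum>al\<leftarrow>als. al * inverse q)"
  if "q \<noteq> 0"
proof (induction als)
  case Nil then show ?case by (simp add: words_0)
next
  case (Cons al als)
  let ?m = "length als" let ?X = "replicate ?m True"
  have F: "(\<Sum>w\<in>words ?m. tm q (al#als) E1p (True # ?X) (False # w) * tm q (al#als) E0p (False # w) (True # ?X))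
    = al * inverse q"
  proof -
    have "(\<Sum>w\<in>words ?m. tm q (al#als) E1p (True # ?X) (False # w) * tm q (al#als) E0p (False # w) (True # ?X))
       = (\<Sum>w\<in>words ?m. if w = ?X then kk1 q ?X * (inverse q * al * kk0 q ?X) else 0)"
      by (intro sum.cong) (auto simp: tm_K0 tm_K1 words_def)
    also have "\<dots> = al * inverse q" using that by (simp add: field_simps power_inverse)
    finally show ?thesis .
  qed
  show ?case
    unfolding length_Cons sum_words_Suc replicate_Suc F using Cons by simp
qed

lemma qq: "(q::'a::field) \<noteq> 0 \<Longrightarrow> q * (inverse q * x) = x"
  by (simp add: mult.assoc[symmetric])

fun GG :: "'a::field \<Rightarrow> nat \<Rightarrow> 'a" where
  "GG q 0 = 0" | "GG q (Suc m) = inverse q * GG q m + q ^ m"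
fun HH :: "'a::field \<Rightarrow> nat \<Rightarrow> 'a" where
  "HH q 0 = 0" | "HH q (Suc m) = HH q m + q * inverse q ^ (2 * m)"
fun JJ :: "'a::field \<Rightarrow> 'a list \<Rightarrow> 'a" where
  "JJ q [] = 0" | "JJ q (al # als) = inverse q * JJ q als + q ^ 2 * inverse al * inverse q ^ length als"

lemma T31: "(\<Sum>w\<in>words (length als). tm q als E0p (replicate (length als) False) w * tm q als E1p w (replicate (length als) False))
   = (\<Sum>al\<leftarrow>als. al * inverse q)"
  if "q \<noteq> 0"
proof (induction als)
  case Nil then show ?case by (simp add: words_0)
next
  case (Cons al als)
  let ?m = "length als" let ?Y = "replicate ?m False"
  have T: "(\<Sum>w\<in>words ?m. tm q (al#als) E0p (False # ?Y) (True # w) * tm q (al#als) E1p (True # w) (False # ?Y))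
    = al * inverse q"
  proof -
    have "(\<Sum>w\<in>words ?m. tm q (al#als) E0p (False # ?Y) (True # w) * tm q (al#als) E1p (True # w) (False # ?Y))
       = (\<Sum>w\<in>words ?m. if w = ?Y then (inverse q * al * kk0 q ?Y) * kk1 q ?Y else 0)"
      by (intro sum.cong) (auto simp: tm_K0 tm_K1 words_def)
    also have "\<dots> = al * inverse q" using that by (simp add: field_simps power_inverse)
    finally show ?thesis .
  qed
  show ?case
    unfolding length_Cons sum_words_Suc replicate_Suc T using Cons by simp
qed

lemma S14: "(\<Sum>w\<in>words (length als). tm q als E1p (replicate (length als) True) w * tm q als E1m w (replicate (length als) True))
   = GG q (length als)"
  if "q \<noteq> 0"
proof (induction als)
  case Nil then show ?case by (simp add: words_0)
next
  case (Cons al als)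
  let ?m = "length als" let ?X = "replicate ?m True"
  have F: "(\<Sum>w\<in>words ?m. tm q (al#als) E1p (True # ?X) (False # w) * tm q (al#als) E1m (False # w) (True # ?X))
    = q ^ ?m"
  proof -
    have "(\<Sum>w\<in>words ?m. tm q (al#als) E1p (True # ?X) (False # w) * tm q (al#als) E1m (False # w) (True # ?X))
       = (\<Sum>w\<in>words ?m. if w = ?X then kk1 q ?X else 0)"
      by (intro sum.cong) (auto simp: tm_K0 tm_K1 words_def)
    also have "\<dots> = q ^ ?m" by simp
    finally show ?thesis .
  qed
  have T: "(\<Sum>w\<in>words ?m. tm q (al#als) E1p (True # ?X) (True # w) * tm q (al#als) E1m (True # w) (True # ?X))
    = inverse q * (\<Sum>w\<in>words ?m. tm q als E1p ?X w * tm q als E1m w ?X)"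
    by (simp add: sum_distrib_left algebra_simps)
  show ?case
    unfolding length_Cons sum_words_Suc replicate_Suc F T using Cons by simp
qed

lemma T32: "(\<Sum>w\<in>words (length als). tm q als E0p (replicate (length als) False) w * tm q als E0m w (replicate (length als) False))
   = GG q (length als)"
  if "q \<noteq> 0" "\<forall>al\<in>set als. al \<noteq> 0"
  using that(2)
proof (induction als)
  case Nil then show ?case by (simp add: words_0)
next
  case (Cons al als)
  let ?m = "length als" let ?Y = "replicate ?m False"
  have T: "(\<Sum>w\<in>words ?m. tm q (al#als) E0p (False # ?Y) (True # w) * tm q (al#als) E0m (True # w) (False # ?Y))
    = q ^ ?m"
  proof -
    have "(\<Sum>w\<in>words ?m. tm q (al#als) E0p (False # ?Y) (True # w) * tm q (al#als) E0m (True # w) (False # ?Y))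
       = (\<Sum>w\<in>words ?m. if w = ?Y then (inverse q * al * kk0 q ?Y) * (q * inverse al) else 0)"
      by (intro sum.cong) (auto simp: tm_K0 tm_K1 words_def)
    also have "\<dots> = q ^ ?m" using that Cons.prems by (simp add: field_simps)
    finally show ?thesis .
  qed
  have F: "(\<Sum>w\<in>words ?m. tm q (al#als) E0p (False # ?Y) (False # w) * tm q (al#als) E0m (False # w) (False # ?Y))
    = inverse q * (\<Sum>w\<in>words ?m. tm q als E0p ?Y w * tm q als E0m w ?Y)"
    by (simp add: sum_distrib_left algebra_simps)
  show ?case
    unfolding length_Cons sum_words_Suc replicate_Suc F T using Cons by simp
qed

lemma S23: "(\<Sum>w\<in>words (length als). tm q als E0m (replicate (length als) True) w * kk0 q w * tm q als E0p w (replicate (length als) True))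
   = HH q (length als)"
  if "q \<noteq> 0" "\<forall>al\<in>set als. al \<noteq> 0"
  using that(2)
proof (induction als)
  case Nil then show ?case by (simp add: words_0)
next
  case (Cons al als)
  let ?m = "length als" let ?X = "replicate ?m True"
  have F: "(\<Sum>w\<in>words ?m. tm q (al#als) E0m (True # ?X) (False # w) * kk0 q (False # w) * tm q (al#als) E0p (False # w) (True # ?X))
    = q * inverse q ^ (2 * ?m)"
  proof -
    have "(\<Sum>w\<in>words ?m. tm q (al#als) E0m (True # ?X) (False # w) * kk0 q (False # w) * tm q (al#als) E0p (False # w) (True # ?X))
       = (\<Sum>w\<in>words ?m. if w = ?X then (q * inverse al) * (q * kk0 q ?X) * (inverse q * al * kk0 q ?X) else 0)"
      by (intro sum.cong) (auto simp: tm_K0 tm_K1 words_def)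
    also have "\<dots> = q * inverse q ^ (2 * ?m)" using that Cons.prems by (simp add: field_simps power_mult power2_eq_square)
    finally show ?thesis .
  qed
  have T: "(\<Sum>w\<in>words ?m. tm q (al#als) E0m (True # ?X) (True # w) * kk0 q (True # w) * tm q (al#als) E0p (True # w) (True # ?X))
    = (\<Sum>w\<in>words ?m. tm q als E0m ?X w * kk0 q w * tm q als E0p w ?X)"
    using that by (simp add: sum_distrib_left algebra_simps qq)
  show ?case
    unfolding length_Cons sum_words_Suc replicate_Suc F T using Cons by simp
qed

lemma T41: "(\<Sum>w\<in>words (length als). tm q als E1m (replicate (length als) False) w * kk1 q w * tm q als E1p w (replicate (length als) False))
   = HH q (length als)"
  if "q \<noteq> 0"
proof (induction als)
  case Nil then show ?case by (simp add: words_0)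
next
  case (Cons al als)
  let ?m = "length als" let ?Y = "replicate ?m False"
  have T: "(\<Sum>w\<in>words ?m. tm q (al#als) E1m (False # ?Y) (True # w) * kk1 q (True # w) * tm q (al#als) E1p (True # w) (False # ?Y))
    = q * inverse q ^ (2 * ?m)"
  proof -
    have "(\<Sum>w\<in>words ?m. tm q (al#als) E1m (False # ?Y) (True # w) * kk1 q (True # w) * tm q (al#als) E1p (True # w) (False # ?Y))
       = (\<Sum>w\<in>words ?m. if w = ?Y then (q * kk1 q ?Y) * kk1 q ?Y else 0)"
      by (intro sum.cong) (auto simp: tm_K0 tm_K1 words_def)
    also have "\<dots> = q * inverse q ^ (2 * ?m)" using that by (simp add: field_simps power_mult power2_eq_square)
    finally show ?thesis .
  qed
  have F: "(\<Sum>w\<in>words ?m. tm q (al#als) E1m (False # ?Y) (False # w) * kk1 q (False # w) * tm q (al#als) E1p (False # w) (False # ?Y))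
    = (\<Sum>w\<in>words ?m. tm q als E1m ?Y w * kk1 q w * tm q als E1p w ?Y)"
    using that by (simp add: sum_distrib_left algebra_simps qq)
  show ?case
    unfolding length_Cons sum_words_Suc replicate_Suc F T using Cons by simp
qed

lemma S24: "(\<Sum>w\<in>words (length als). tm q als E0m (replicate (length als) True) w * kk0 q w * tm q als E1m w (replicate (length als) True))
   = JJ q als"
  if "q \<noteq> 0"
proof (induction als)
  case Nil then show ?case by (simp add: words_0)
next
  case (Cons al als)
  let ?m = "length als" let ?X = "replicate ?m True"
  have F: "(\<Sum>w\<in>words ?m. tm q (al#als) E0m (True # ?X) (False # w) * kk0 q (False # w) * tm q (al#als) E1m (False # w) (True # ?X))
    = q ^ 2 * inverse al * inverse q ^ ?m"
  proof -
    have "(\<Sum>w\<in>words ?m. tm q (al#als) E0m (True # ?X) (False # w) * kk0 q (False # w) * tm q (al#als) E1m (False # w) (True # ?X))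
       = (\<Sum>w\<in>words ?m. if w = ?X then (q * inverse al) * (q * kk0 q ?X) else 0)"
      by (intro sum.cong) (auto simp: tm_K0 tm_K1 words_def)
    also have "\<dots> = q ^ 2 * inverse al * inverse q ^ ?m" by (simp add: power2_eq_square)
    finally show ?thesis .
  qed
  have T: "(\<Sum>w\<in>words ?m. tm q (al#als) E0m (True # ?X) (True # w) * kk0 q (True # w) * tm q (al#als) E1m (True # w) (True # ?X))
    = inverse q * (\<Sum>w\<in>words ?m. tm q als E0m ?X w * kk0 q w * tm q als E1m w ?X)"
    using that by (simp add: sum_distrib_left algebra_simps qq)
  show ?case
    unfolding length_Cons sum_words_Suc replicate_Suc F T using Cons by simp
qed

lemma T42: "(\<Sum>w\<in>words (length als). tm q als E1m (replicate (length als) False) w * kk1 q w * tm q als E0m w (replicate (length als) False))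
   = JJ q als"
  if "q \<noteq> 0"
proof (induction als)
  case Nil then show ?case by (simp add: words_0)
next
  case (Cons al als)
  let ?m = "length als" let ?Y = "replicate ?m False"
  have T: "(\<Sum>w\<in>words ?m. tm q (al#als) E1m (False # ?Y) (True # w) * kk1 q (True # w) * tm q (al#als) E0m (True # w) (False # ?Y))
    = q ^ 2 * inverse al * inverse q ^ ?m"
  proof -
    have "(\<Sum>w\<in>words ?m. tm q (al#als) E1m (False # ?Y) (True # w) * kk1 q (True # w) * tm q (al#als) E0m (True # w) (False # ?Y))
       = (\<Sum>w\<in>words ?m. if w = ?Y then (q * kk1 q ?Y) * (q * inverse al) else 0)"
      by (intro sum.cong) (auto simp: tm_K0 tm_K1 words_def)
    also have "\<dots> = q ^ 2 * inverse al * inverse q ^ ?m" by (simp add: power2_eq_square)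
    finally show ?thesis .
  qed
  have F: "(\<Sum>w\<in>words ?m. tm q (al#als) E1m (False # ?Y) (False # w) * kk1 q (False # w) * tm q (al#als) E0m (False # w) (False # ?Y))
    = inverse q * (\<Sum>w\<in>words ?m. tm q als E1m ?Y w * kk1 q w * tm q als E0m w ?Y)"
    using that by (simp add: sum_distrib_left algebra_simps qq)
  show ?case
    unfolding length_Cons sum_words_Suc replicate_Suc F T using Cons by simp
qed

lemma GG_closed: "q \<noteq> 0 \<Longrightarrow> (q - inverse q) * GG q m = q ^ m - inverse q ^ m"
proof (induction m)
  case (Suc m)
  have "(q - inverse q) * GG q (Suc m) = inverse q * ((q - inverse q) * GG q m) + (q - inverse q) * q ^ m"
    by (simp add: algebra_simps)
  also have "\<dots> = inverse q * (q ^ m - inverse q ^ m) + (q - inverse q) * q ^ m" using Suc by simp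
  also have "\<dots> = q ^ Suc m - inverse q ^ Suc m" using Suc.prems by (simp add: algebra_simps)
  finally show ?case .
qed simp

lemma HH_closed: "q \<noteq> 0 \<Longrightarrow> (q - inverse q) * HH q m = q ^ 2 - q ^ 2 * inverse q ^ (2 * m)"
proof (induction m)
  case (Suc m)
  have "(q - inverse q) * HH q (Suc m) = (q - inverse q) * HH q m + (q - inverse q) * q * inverse q ^ (2 * m)"
    by (simp add: algebra_simps)
  also have "\<dots> = q ^ 2 - q ^ 2 * inverse q ^ (2 * m) + (q - inverse q) * q * inverse q ^ (2 * m)" using Suc by simp
  also have "\<dots> = q ^ 2 - q ^ 2 * inverse q ^ (2 * Suc m)" using Suc.prems
    by (simp add: field_simps power2_eq_square)
  finally show ?case .
qed simp

lemma omult_K1: "length als = d \<Longrightarrow> w \<in> words d \<Longrightarrow> omult d M (tm q als K1) w' w = M w' w * kk1 q w"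
proof -
  assume l: "length als = d" and w: "w \<in> words d"
  have "omult d M (tm q als K1) w' w = (\<Sum>w1\<in>words d. if w1 = w then M w' w1 * kk1 q w else 0)"
    unfolding omult_def using l w by (intro sum.cong) (auto simp: tm_K1 words_def)
  then show ?thesis using w by simp
qed

lemma omult_K0: "length als = d \<Longrightarrow> w \<in> words d \<Longrightarrow> omult d M (tm q als K0) w' w = M w' w * kk0 q w"
proof -
  assume l: "length als = d" and w: "w \<in> words d"
  have "omult d M (tm q als K0) w' w = (\<Sum>w1\<in>words d. if w1 = w then M w' w1 * kk0 q w else 0)"
    unfolding omult_def using l w by (intro sum.cong) (auto simp: tm_K0 words_def)
  then show ?thesis using w by simp
qed

lemma Rop_eq: "length als = d \<Longrightarrow> w \<in> words d \<Longrightarrow> Rop q als u v w' w = u * tm q als E0p w' w + v * (tm q als E1m w' w * kk1 q w)"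
  unfolding Rop_def by (simp add: omult_K1)

lemma Lop_eq: "length als = d \<Longrightarrow> w \<in> words d \<Longrightarrow> Lop q als us vs w' w = us * tm q als E1p w' w + vs * (tm q als E0m w' w * kk0 q w)"
  unfolding Lop_def by (simp add: omult_K0)

lemma HR: "length als = d \<Longrightarrow> w' \<in> words d \<Longrightarrow> w \<in> words d \<Longrightarrow> Rop q als u v w' w \<noteq> 0 \<Longrightarrow> nF w' = Suc (nF w)"
proof -
  assume l: "length als = d" and w: "w' \<in> words d" "w \<in> words d" and n: "Rop q als u v w' w \<noteq> 0"
  then have "tm q als E0p w' w \<noteq> 0 \<or> tm q als E1m w' w \<noteq> 0" by (auto simp: Rop_eq)
  then show ?thesis using tm_E0p[of q als w' w] tm_E1m[of q als w' w] l w by (auto simp: words_def)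
qed

lemma HL: "length als = d \<Longrightarrow> w' \<in> words d \<Longrightarrow> w \<in> words d \<Longrightarrow> Lop q als u v w' w \<noteq> 0 \<Longrightarrow> nF w = Suc (nF w')"
proof -
  assume l: "length als = d" and w: "w' \<in> words d" "w \<in> words d" and n: "Lop q als u v w' w \<noteq> 0"
  then have "tm q als E1p w' w \<noteq> 0 \<or> tm q als E0m w' w \<noteq> 0" by (auto simp: Lop_eq)
  then show ?thesis using tm_E1p[of q als w' w] tm_E0m[of q als w' w] l w by (auto simp: words_def)
qed

lemma Aop_ap: 
  assumes q: "q \<noteq> 0" and l: "length als = d" and w': "w' \<in> words d"
  shows "ap d (Aop q als a b c N) z w' = th q d a b c (nF w') * z w' + ap d N z w'"
proof -
  have "ap d (Aop q als a b c N) z w' = (\<Sum>w\<in>words d. (if w = w' then (a + b * kk0 q w' + c * kk1 q w') * z w' else 0) + N w' w * z w)"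
    unfolding ap_def Aop_def using l by (intro sum.cong) (auto simp: oid_def tm_K0 tm_K1 words_def algebra_simps)
  also have "\<dots> = (a + b * kk0 q w' + c * kk1 q w') * z w' + ap d N z w'"
    using w' by (simp add: sum.distrib ap_def)
  finally show ?thesis using w' q l by (simp add: kk0_pow kk1_pow th_def words_def)
qed

lemma zeta_exp:
  assumes l: "length als = d"
  shows "omult d (Lop q als us vs) (Rop q als u v) (replicate d True) (replicate d True)
    = us * u * (\<Sum>w\<in>words d. tm q als E1p (replicate d True) w * tm q als E0p w (replicate d True))
    + us * v * q ^ d * (\<Sum>w\<in>words d. tm q als E1p (replicate d True) w * tm q als E1m w (replicate d True))
    + vs * u * (\<Sum>w\<in>words d. tm q als E0m (replicate d True) w * kk0 q w * tm q als E0p w (replicate d True))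
    + vs * v * q ^ d * (\<Sum>w\<in>words d. tm q als E0m (replicate d True) w * kk0 q w * tm q als E1m w (replicate d True))"
proof -
  let ?X = "replicate d True"
  have "omult d (Lop q als us vs) (Rop q als u v) ?X ?X = (\<Sum>w\<in>words d.
      us * u * (tm q als E1p ?X w * tm q als E0p w ?X)
    + us * v * q ^ d * (tm q als E1p ?X w * tm q als E1m w ?X)
    + vs * u * (tm q als E0m ?X w * kk0 q w * tm q als E0p w ?X)
    + vs * v * q ^ d * (tm q als E0m ?X w * kk0 q w * tm q als E1m w ?X))"
    unfolding omult_def using l by (intro sum.cong) (auto simp: Lop_eq Rop_eq algebra_simps)
  then show ?thesis by (simp add: sum.distrib sum_distrib_left[symmetric])
qed

lemma kappa_exp:
  assumes l: "length als = d"
  shows "omult d (Rop q als u v) (Lop q als us vs) (replicate d False) (replicate d False)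
    = u * us * (\<Sum>w\<in>words d. tm q als E0p (replicate d False) w * tm q als E1p w (replicate d False))
    + u * vs * q ^ d * (\<Sum>w\<in>words d. tm q als E0p (replicate d False) w * tm q als E0m w (replicate d False))
    + v * us * (\<Sum>w\<in>words d. tm q als E1m (replicate d False) w * kk1 q w * tm q als E1p w (replicate d False))
    + v * vs * q ^ d * (\<Sum>w\<in>words d. tm q als E1m (replicate d False) w * kk1 q w * tm q als E0m w (replicate d False))"
proof -
  let ?Y = "replicate d False"
  have "omult d (Rop q als u v) (Lop q als us vs) ?Y ?Y = (\<Sum>w\<in>words d.
      u * us * (tm q als E0p ?Y w * tm q als E1p w ?Y)
    + u * vs * q ^ d * (tm q als E0p ?Y w * tm q als E0m w ?Y)
    + v * us * (tm q als E1m ?Y w * kk1 q w * tm q als E1p w ?Y)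
    + v * vs * q ^ d * (tm q als E1m ?Y w * kk1 q w * tm q als E0m w ?Y))"
    unfolding omult_def using l by (intro sum.cong) (auto simp: Lop_eq Rop_eq algebra_simps)
  then show ?thesis by (simp add: sum.distrib sum_distrib_left[symmetric])
qed

lemma final_alg:
  fixes q Q u v us vs b c bs cs a as G H J \<sigma> t0 t1 td s0 s1 sd :: "'a::field"
  assumes q: "q \<noteq> 0" and Q: "Q \<noteq> 0" and qq: "q - inverse q \<noteq> 0"
    and uvs: "u * vs = - b * bs * inverse q * (q - inverse q) ^ 2"
    and vus: "v * us = - c * cs * inverse q * (q - inverse q) ^ 2"
    and hG: "(q - inverse q) * G = Q - inverse Q"
    and hH: "(q - inverse q) * H = q ^ 2 - q ^ 2 * inverse Q ^ 2"
    and t0: "t0 = a + b * inverse Q + c * Q"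
    and t1: "t1 = a + b * Q * inverse q ^ 2 + c * q ^ 2 * inverse Q"
    and td: "td = a + b * Q + c * inverse Q"
    and s0: "s0 = as + bs * inverse Q + cs * Q"
    and s1: "s1 = as + bs * q ^ 2 * inverse Q + cs * Q * inverse q ^ 2"
    and sd: "sd = as + bs * Q + cs * inverse Q"
    and D: "td - t1 \<noteq> 0"
  shows "s1 - ((us * u * \<sigma> + us * v * Q * G + vs * u * H + vs * v * Q * J) + (s0 - s1) * (t0 - t1)) / (t1 - td)
       = sd + (u * us * \<sigma> + u * vs * Q * G + v * us * H + v * vs * Q * J) / (td - t1)"
proof -
  have k1: "(u * us * \<sigma> + u * vs * Q * G + v * us * H + v * vs * Q * J) - (us * u * \<sigma> + us * v * Q * G + vs * u * H + vs * v * Q * J)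
      = (u * vs - v * us) * (Q * G - H)" by (simp add: algebra_simps)
  also have "\<dots> = (c * cs - b * bs) * inverse q * (q - inverse q) * (Q * ((q - inverse q) * G) - (q - inverse q) * H)"
    unfolding uvs vus by (simp add: power2_eq_square algebra_simps)
  also have "\<dots> = (c * cs - b * bs) * inverse q * (q - inverse q) * (Q * (Q - inverse Q) - (q ^ 2 - q ^ 2 * inverse Q ^ 2))"
    unfolding hG hH ..
  also have "\<dots> = (s1 - sd) * (td - t1) + (s0 - s1) * (t0 - t1)"
    unfolding s1 sd td t1 s0 t0 using q Q by (simp add: field_simps) algebra
  finally have key: "(u * us * \<sigma> + u * vs * Q * G + v * us * H + v * vs * Q * J) - (us * u * \<sigma> + us * v * Q * G + vs * u * H + vs * v * Q * J)
     = (s1 - sd) * (td - t1) + (s0 - s1) * (t0 - t1)" .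
  define K where "K = u * us * \<sigma> + u * vs * Q * G + v * us * H + v * vs * Q * J"
  define Z where "Z = us * u * \<sigma> + us * v * Q * G + vs * u * H + vs * v * Q * J"
  have K: "K = Z + (s0 - s1) * (t0 - t1) + (s1 - sd) * (td - t1)"
    using key unfolding K_def[symmetric] Z_def[symmetric] by (simp add: algebra_simps)
  have e: "t1 - td = - (td - t1)" by simp
  have "sd + K / (td - t1) = sd + (Z + (s0 - s1) * (t0 - t1)) / (td - t1) + (s1 - sd)"
    unfolding K using D by (simp add: add_divide_distrib)
  also have "\<dots> = s1 - (Z + (s0 - s1) * (t0 - t1)) / (t1 - td)"
    unfolding e divide_minus_right by simp
  finally show ?thesis unfolding K_def Z_def by simp
qed


lemma th_pow: "q \<noteq> 0 \<Longrightarrow> th q d a b c i = a + b * q ^ (2 * i) * inverse (q ^ d) + c * q ^ d * inverse (q ^ (2 * i))"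
proof -
  assume q: "q \<noteq> 0"
  have e1: "2 * int i - int d = int (2 * i) - int d" by simp
  have e2: "int d - 2 * int i = int d - int (2 * i)" by simp
  have p: "q powi (int (2 * i)) = q ^ (2 * i)" "q powi (int d) = q ^ d" by (simp_all only: power_int_of_nat)
  have d1: "q powi (int (2 * i) - int d) = q ^ (2 * i) * inverse (q ^ d)"
    using power_int_diff[of q "int (2 * i)" "int d"] q by (simp only: p divide_inverse) simp
  have d2: "q powi (int d - int (2 * i)) = q ^ d * inverse (q ^ (2 * i))"
    using power_int_diff[of q "int d" "int (2 * i)"] q by (simp only: p divide_inverse) simp
  show ?thesis unfolding th_def e1 e2 d1 d2 by (simp add: mult.assoc)
qed

theorem lemma9p8:
  fixes q a b c as bs cs u v us vs zeta1 :: "'a::field"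
    and d :: nat and als :: "'a list"
  assumes alg_closed: "\<forall>p :: 'a poly. degree p \<ge> 1 \<longrightarrow> (\<exists>z. poly p z = 0)"
    and d1: "d \<ge> 1"
    and nz: "q \<noteq> 0" "b \<noteq> 0" "c \<noteq> 0" "bs \<noteq> 0" "cs \<noteq> 0"
    and q2: "q ^ 2 \<noteq> 1" "q ^ 2 \<noteq> -1"
    and th_dist: "inj_on (th q d a b c) {0..d}"
    and ths_dist: "inj_on (th q d as bs cs) {0..d}"
    and len: "length als = d"
    and al_nz: "\<forall>al \<in> set als. al \<noteq> 0"
    and uvs: "u * vs = - b * bs * inverse q * (q - inverse q) ^ 2"
    and vus: "v * us = - c * cs * inverse q * (q - inverse q) ^ 2"
    and zeta1: "\<forall>w. length w = d \<longrightarrow>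
        omult d (Lop q als us vs) (Rop q als u v) w (replicate d True)
          = zeta1 * oid w (replicate d True)"
  shows
   "let A = Aop q als a b c (Rop q als u v);
        As = Aop q als as bs cs (Lop q als us vs);
        \<theta> = th q d a b c; \<theta>s = th q d as bs cs;
        E = idem d A \<theta>; Es = idem d As \<theta>s;
        a0 = \<theta> 0 + zeta1 * inverse (\<theta>s 0 - \<theta>s 1);
        asd = \<theta>s 1 - (zeta1 + (\<theta>s 0 - \<theta>s 1) * (\<theta> 0 - \<theta> (d - 1))) / (\<theta> (d - 1) - \<theta> d)
    in opeq d (omult d (omult d (Es 0) A) (Es 0)) (\<lambda>w' w. a0 * Es 0 w' w)
     \<and> opeq d (omult d (omult d (E d) As) (E d)) (\<lambda>w' w. asd * E d w' w)"
  proof -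
  define R where "R = Rop q als u v"
  define L where "L = Lop q als us vs"
  define A where "A = Aop q als a b c R"
  define As where "As = Aop q als as bs cs L"
  define t where "t = th q d a b c"
  define ts where "ts = th q d as bs cs"
  define X where "X = replicate d True"
  define Y where "Y = replicate d False"
  have q: "q \<noteq> 0" using nz(1) .
  have HA: "\<And>z w'. w' \<in> words d \<Longrightarrow> ap d A z w' = t (nF w') * z w' + ap d R z w'"
    unfolding A_def t_def using Aop_ap[OF q len] by blast
  have HAs: "\<And>z w'. w' \<in> words d \<Longrightarrow> ap d As z w' = ts (nF w') * z w' + ap d L z w'"
    unfolding As_def ts_def using Aop_ap[OF q len] by blast
  have HR': "\<And>w' w. w' \<in> words d \<Longrightarrow> w \<in> words d \<Longrightarrow> R w' w \<noteq> 0 \<Longrightarrow> nF w' = Suc (nF w)"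
    unfolding R_def using HR[OF len] by blast
  have HL': "\<And>w' w. w' \<in> words d \<Longrightarrow> w \<in> words d \<Longrightarrow> L w' w \<noteq> 0 \<Longrightarrow> nF w = Suc (nF w')"
    unfolding L_def using HL[OF len] by blast
  have tsd: "\<And>j. 1 \<le> j \<Longrightarrow> j \<le> d \<Longrightarrow> ts 0 \<noteq> ts j"
  proof
    fix j assume j: "1 \<le> j" "j \<le> d" "ts 0 = ts j"
    then have "0 = j" using ths_dist unfolding inj_on_def ts_def by (metis atLeastAtMost_iff le0)
    then show False using j by simp
  qed
  have td: "\<And>j. j < d \<Longrightarrow> t d \<noteq> t j"
  proof
    fix j assume j: "j < d" "t d = t j"
    then have "d = j" using th_dist unfolding inj_on_def t_def by (metis atLeastAtMost_iff le0 less_imp_le order_refl)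
    then show False using j by simp
  qed
  have zeta': "\<And>w. w \<in> words d \<Longrightarrow> omult d L R w (replicate d True) = zeta1 * oid w (replicate d True)"
    using zeta1 by (simp add: words_def L_def R_def)
  note P1 = part1[OF HA HR' HAs HL' tsd d1 zeta']
  note P2 = part2[OF HA HR' HAs HL' td d1]
  have z1: "zeta1 = omult d L R X X" using zeta'[of X] by (simp add: X_def oid_def)
  define Q where "Q = q ^ d"
  have Qnz: "Q \<noteq> 0" using q by (simp add: Q_def)
  have iQ: "inverse q ^ d = inverse Q" by (simp add: Q_def power_inverse)
  have qq: "q - inverse q \<noteq> 0"
  proof
    assume "q - inverse q = 0"
    then have "q * q = 1" using q by (simp add: field_simps)
    then show False using q2(1) by (simp add: power2_eq_square)
  qed
  have hG: "(q - inverse q) * GG q d = Q - inverse Q" using GG_closed[OF q, of d] iQ by (simp add: Q_def)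
  have hH: "(q - inverse q) * HH q d = q ^ 2 - q ^ 2 * inverse Q ^ 2"
    using HH_closed[OF q, of d] iQ by (simp add: power_mult[symmetric] mult.commute[of 2 d] power_mult)
  have QQ: "q ^ (2 * d) = Q * Q" by (simp add: Q_def power_mult mult.commute[of 2 d] power2_eq_square)
  have QQ1: "q ^ (2 * (d - 1)) = Q * Q * inverse q ^ 2"
  proof -
    have e: "2 * (d - 1) + 2 = 2 * d" using d1 by simp
    have "q ^ (2 * (d - 1)) * q ^ 2 = q ^ (2 * d)" by (metis e power_add)
    then show ?thesis using q unfolding QQ by (simp add: field_simps)
  qed
  have t0: "t 0 = a + b * inverse Q + c * Q" unfolding t_def th_pow[OF q] by (simp add: Q_def)
  have t1: "t (d - 1) = a + b * Q * inverse q ^ 2 + c * q ^ 2 * inverse Q"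
    unfolding t_def th_pow[OF q] QQ1 using q Qnz by (simp add: Q_def[symmetric] field_simps)
  have tdv: "t d = a + b * Q + c * inverse Q"
    unfolding t_def th_pow[OF q] QQ using Qnz by (simp add: Q_def[symmetric] field_simps)
  have s0: "ts 0 = as + bs * inverse Q + cs * Q" unfolding ts_def th_pow[OF q] by (simp add: Q_def)
  have s1: "ts 1 = as + bs * q ^ 2 * inverse Q + cs * Q * inverse q ^ 2"
    unfolding ts_def th_pow[OF q] by (simp add: Q_def power_inverse)
  have sdv: "ts d = as + bs * Q + cs * inverse Q"
    unfolding ts_def th_pow[OF q] QQ using Qnz by (simp add: Q_def[symmetric] field_simps)
  have D: "t d - t (d - 1) \<noteq> 0" using td[of "d - 1"] d1 by simp
  have zexp: "zeta1 = us * u * (\<Sum>al\<leftarrow>als. al * inverse q) + us * v * Q * GG q d + vs * u * HH q d + vs * v * Q * JJ q als"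
    unfolding z1 L_def R_def X_def zeta_exp[OF len] Q_def
    using S13[OF q, of als] S14[OF q, of als] S23[OF q al_nz] S24[OF q, of als] len by simp
  have kexp: "omult d R L Y Y = u * us * (\<Sum>al\<leftarrow>als. al * inverse q) + u * vs * Q * GG q d + v * us * HH q d + v * vs * Q * JJ q als"
    unfolding L_def R_def Y_def kappa_exp[OF len] Q_def
    using T31[OF q, of als] T32[OF q al_nz] T41[OF q, of als] T42[OF q, of als] len by simp
  have scal: "ts 1 - (zeta1 + (ts 0 - ts 1) * (t 0 - t (d - 1))) / (t (d - 1) - t d)
      = ts d + omult d R L Y Y / (t d - t (d - 1))"
    unfolding zexp kexp
    by (rule final_alg[OF q Qnz qq uvs vus hG hH t0 t1 tdv s0 s1 sdv D])
  show ?thesis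
    unfolding Let_def R_def[symmetric] L_def[symmetric] A_def[symmetric] As_def[symmetric]
      t_def[symmetric] ts_def[symmetric] scal
    using P1 P2 by (simp add: Y_def)
qed



end
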